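(* Let $A$ be an entrywise non-negative $d\times d$ matrix with $\rho(A)<1$, let $M=(I-A^T)(I-A)$, and let $\mu$ be the smallest eigenvalue of $M$. Then $\mu>0$ and $M$ has an entrywise non-negative eigenvector $\mathbf v$ with $\|\mathbf v\|=1$ associated with $\mu$. Moreover, with $r=\sqrt\mu$, the vector $\mathbf u=\frac1r(I-A)\mathbf v$ and the matrix $X=A+r\,\mathbf u\,\mathbf v^T$ are both entrywise non-negative, $\rho(X)\ge 1$, $\|X-A\|=r$, and for every real $d\times d$ matrix $Y$ with $\rho(Y)\ge 1$ one has $\|Y-A\|\ge r$. In other words, $X$ is a closest matrix to $A$ (among all real matrices) with spectral radius at least one, and it is non-negative.
   Context: $\rho(\cdot)$ denotes the spectral radius. For matrices, $\|X\|=\sqrt{\operatorname{tr}(X^TX)}=\sqrt{\sum_{i,j}x_{ij}^2}$ is the Frobenius norm; for vectors, $\|\cdot\|$ is the Euclidean norm. Inequalities between vectors or matrices are entrywise. *)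

theory Defs
  imports "Jordan_Normal_Form.Spectral_Radius"
begin

definition real_spectral_radius :: "real mat \<Rightarrow> real" where
  "real_spectral_radius A = spectral_radius (map_mat complex_of_real A)"

definition frob_norm :: "real mat \<Rightarrow> real" where
  "frob_norm A = sqrt (\<Sum>i<dim_row A. \<Sum>j<dim_col A. (A $$ (i,j))^2)"

definition vec_norm :: "real vec \<Rightarrow> real" where
  "vec_norm v = sqrt (\<Sum>i<dim_vec v. (v $ i)^2)"

definition nonneg_mat :: "real mat \<Rightarrow> bool" where
  "nonneg_mat A \<longleftrightarrow> (\<forall>i<dim_row A. \<forall>j<dim_col A. A $$ (i,j) \<ge> 0)"

definition nonneg_vec :: "real vec \<Rightarrow> bool" where
  "nonneg_vec v \<longleftrightarrow> (\<forall>i<dim_vec v. v $ i \<ge> 0)"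

definition outer_prod :: "real vec \<Rightarrow> real vec \<Rightarrow> real mat" where
  "outer_prod u v = mat (dim_vec u) (dim_vec v) (\<lambda>(i,j). u $ i * v $ j)"

end

theory Submission
  imports Defs "HOL-Analysis.Function_Topology" "HOL-Analysis.Convex"
begin

lemma exists_min_sphere:
  fixes Q :: "(nat \<Rightarrow> real) \<Rightarrow> real"
  assumes Qc: "continuous_on UNIV Q" and d: "d > 0"
  shows "\<exists>x. (\<forall>i\<ge>d. x i = 0) \<and> (\<Sum>i<d. (x i)^2) = 1 \<and>
     (\<forall>y. (\<forall>i\<ge>d. y i = 0) \<and> (\<Sum>i<d. (y i)^2) = 1 \<longrightarrow> Q x \<le> Q y)"
proof -
  define K where "K = PiE UNIV (\<lambda>i::nat. if i<d then {-1..1::real} else {0})"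
  have "compactin (product_topology (\<lambda>_. euclidean) UNIV) K"
    unfolding K_def compactin_PiE by auto
  hence cK: "compact K" by (simp add: euclidean_product_topology)
  define S where "S = K \<inter> {y. (\<Sum>i<d. (y i)^2) = 1}"
  have cs: "continuous_on UNIV (\<lambda>y::nat\<Rightarrow>real. (\<Sum>i<d. (y i)^2))"
    by (intro continuous_on_sum continuous_on_power continuous_on_product_coordinates)
  have "closed {y::nat\<Rightarrow>real. (\<Sum>i<d. (y i)^2) = 1}"
    by (rule closed_Collect_eq[OF cs continuous_on_const])
  hence cS: "compact S" unfolding S_def using cK compact_Int_closed by blast
  have Sin: "y \<in> S" if "\<forall>i\<ge>d. y i = 0" "(\<Sum>i<d. (y i)^2) = 1" for y
  proof -
    have "y i \<in> {-1..1}" if i: "i < d" for i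
    proof -
      have "(y i)^2 \<le> (\<Sum>i<d. (y i)^2)"
        by (rule member_le_sum) (use i in auto)
      hence "(y i)^2 \<le> 1^2" using that(1) \<open>(\<Sum>i<d. (y i)^2) = 1\<close> by simp
      thus ?thesis using abs_le_square_iff[of "y i" 1] by auto
    qed
    thus ?thesis using that unfolding S_def K_def by (auto simp: PiE_iff)
  qed
  have "(\<Sum>i<d. ((if i = 0 then 1 else 0::real))^2) = (\<Sum>i<d. (if i = 0 then 1 else 0::real))"
    by (rule sum.cong) auto
  also have "\<dots> = 1" using d by simp
  finally have "(\<lambda>i. if i = 0 then 1 else 0::real) \<in> S"
    by (intro Sin) (use d in auto)
  hence ne: "S \<noteq> {}" by auto
  from continuous_attains_inf[OF cS ne continuous_on_subset[OF Qc]]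
  obtain x where x: "x \<in> S" "\<forall>y\<in>S. Q x \<le> Q y" by auto
  have xK: "x \<in> K" and xs: "(\<Sum>i<d. (x i)^2) = 1" using x(1) unfolding S_def by auto
  have "x i = 0" if "i \<ge> d" for i
    using PiE_mem[OF xK[unfolded K_def], of i] that by auto
  hence "\<forall>i\<ge>d. x i = 0" by auto
  note * = this xs
  thus ?thesis using * x Sin by blast
qed

lemma sp_sum: "x \<in> carrier_vec d \<Longrightarrow> y \<in> carrier_vec d \<Longrightarrow> x \<bullet> y = (\<Sum>i<d. x$i * y$i)"
  by (simp add: scalar_prod_def lessThan_atLeast0)

lemma mv_index: "N \<in> carrier_mat d d \<Longrightarrow> x \<in> carrier_vec d \<Longrightarrow> i < d \<Longrightarrow>
   (N *\<^sub>v x) $ i = (\<Sum>j<d. N $$ (i,j) * x $ j)"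
  by (simp add: scalar_prod_def lessThan_atLeast0)

lemma self_sp_nonneg: "(x::real vec) \<bullet> x \<ge> 0"
  by (simp add: scalar_prod_def sum_nonneg)

lemma self_sp_zero: "(x::real vec) \<in> carrier_vec d \<Longrightarrow> x \<bullet> x = 0 \<Longrightarrow> x = 0\<^sub>v d"
proof -
  assume x: "x \<in> carrier_vec d" and z: "x \<bullet> x = 0"
  have "\<forall>i\<in>{0..<dim_vec x}. x$i * x$i = 0"
    using z unfolding scalar_prod_def by (subst sum_nonneg_eq_0_iff[symmetric]) auto
  thus ?thesis using x by (intro eq_vecI) auto
qed

lemma quad:
  fixes a b :: "real vec"
  assumes "a \<in> carrier_vec d" "b \<in> carrier_vec d"
  shows "(a + t \<cdot>\<^sub>v b) \<bullet> (a + t \<cdot>\<^sub>v b) = a \<bullet> a + 2*t*(a \<bullet> b) + t^2 * (b \<bullet> b)"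
proof -
  have "(a + t \<cdot>\<^sub>v b) \<bullet> (a + t \<cdot>\<^sub>v b) = (\<Sum>i<d. (a$i + t*b$i) * (a$i + t*b$i))"
    using assms by (subst sp_sum[of _ d]) auto
  also have "\<dots> = (\<Sum>i<d. a$i*a$i + 2*t*(a$i*b$i) + t^2*(b$i*b$i))"
    by (rule sum.cong) (auto simp: algebra_simps power2_eq_square)
  also have "\<dots> = a \<bullet> a + 2*t*(a \<bullet> b) + t^2 * (b \<bullet> b)"
    using assms by (simp add: sp_sum[of _ d] sum.distrib sum_distrib_left)
  finally show ?thesis .
qed

lemma quad_neg_lemma:
  fixes a b :: real
  assumes "\<forall>t. 0 \<le> 2*t*a + t^2*b" "a \<ge> 0"
  shows "a = 0"
proof (rule ccontr)
  assume "a \<noteq> 0" hence a: "a > 0" using assms by auto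
  define t where "t = - a / (\<bar>b\<bar> + 1)"
  have pos: "\<bar>b\<bar> + 1 > 0" by simp
  have tB: "t * (\<bar>b\<bar> + 1) = - a" unfolding t_def using pos by simp
  have "2*t*a + t^2*b \<le> 2*t*a + t^2*\<bar>b\<bar>" by (intro add_left_mono mult_left_mono) auto
  moreover have "(\<bar>b\<bar> + 1)^2 * (2*t*a + t^2*\<bar>b\<bar>) = a^2 * (\<bar>b\<bar> - 2*(\<bar>b\<bar>+1))"
  proof -
    have "(\<bar>b\<bar> + 1)^2 * (2*t*a + t^2*\<bar>b\<bar>) = 2*a*(t*(\<bar>b\<bar> + 1))*(\<bar>b\<bar> + 1) + (t*(\<bar>b\<bar> + 1))^2*\<bar>b\<bar>"
      by (simp add: algebra_simps power2_eq_square)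
    also have "\<dots> = a^2 * (\<bar>b\<bar> - 2*(\<bar>b\<bar>+1))" unfolding tB by (simp add: algebra_simps power2_eq_square)
    finally show ?thesis .
  qed
  moreover have "a^2 * (\<bar>b\<bar> - 2*(\<bar>b\<bar>+1)) < 0" using a by (intro mult_pos_neg) auto
  ultimately have "(\<bar>b\<bar> + 1)^2 * (2*t*a + t^2*\<bar>b\<bar>) < 0" by simp
  hence "2*t*a + t^2*\<bar>b\<bar> < 0" using pos by (simp add: mult_less_0_iff)
  hence "2*t*a + t^2*b < 0" using \<open>2*t*a + t^2*b \<le> 2*t*a + t^2*\<bar>b\<bar>\<close> by linarith
  thus False using assms(1) by (meson not_le)
qed

lemma aux_ineq:
  fixes lam xx t xg gg nn ng NN :: real
  assumes "lam*(xx + 2*t*xg + t^2*gg) \<le> nn + 2*t*ng + t^2*NN" "lam*xx = nn" "ng - lam*xg = gg"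
  shows "0 \<le> 2*t*gg + t^2*(NN - lam*gg)"
proof -
  have "0 \<le> (nn + 2*t*ng + t^2*NN) - lam*(xx + 2*t*xg + t^2*gg)" using assms(1) by simp
  also have "\<dots> = 2*t*gg + t^2*(NN - lam*gg)"
  proof -
    have ng: "ng = gg + lam*xg" and nn: "nn = lam*xx" using assms(2,3) by auto
    show ?thesis unfolding ng nn by (simp add: algebra_simps)
  qed
  finally show ?thesis .
qed

lemma psd_eig:
  fixes N :: "real mat"
  assumes N: "N \<in> carrier_mat d d"
    and psd: "\<And>y. y \<in> carrier_vec d \<Longrightarrow> lam * (y \<bullet> y) \<le> (N *\<^sub>v y) \<bullet> (N *\<^sub>v y)"
    and x: "x \<in> carrier_vec d" and eq: "lam * (x \<bullet> x) = (N *\<^sub>v x) \<bullet> (N *\<^sub>v x)"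
  shows "(transpose_mat N * N) *\<^sub>v x = lam \<cdot>\<^sub>v x"
proof -
  define g where "g = (transpose_mat N * N) *\<^sub>v x - lam \<cdot>\<^sub>v x"
  have g: "g \<in> carrier_vec d" unfolding g_def using N x by auto
  have Nx: "N *\<^sub>v x \<in> carrier_vec d" and Ng: "N *\<^sub>v g \<in> carrier_vec d" using N x g by auto
  have key: "(N *\<^sub>v x) \<bullet> (N *\<^sub>v g) - lam * (x \<bullet> g) = g \<bullet> g"
  proof -
    have "(N *\<^sub>v x) \<bullet> (N *\<^sub>v g) = (transpose_mat N *\<^sub>v (N *\<^sub>v x)) \<bullet> g"
      by (rule transpose_vec_mult_scalar[symmetric, OF N g Nx])
    also have "transpose_mat N *\<^sub>v (N *\<^sub>v x) = (transpose_mat N * N) *\<^sub>v x"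
      using N x by simp
    finally have "(N *\<^sub>v x) \<bullet> (N *\<^sub>v g) - lam * (x \<bullet> g) = ((transpose_mat N * N) *\<^sub>v x) \<bullet> g - (lam \<cdot>\<^sub>v x) \<bullet> g"
      using x g by simp
    also have "\<dots> = g \<bullet> g" unfolding g_def
      by (rule minus_scalar_prod_distrib[symmetric, of _ d]) (use N x g in auto)
    finally show ?thesis .
  qed
  have "\<forall>t. 0 \<le> 2*t*(g \<bullet> g) + t^2*((N *\<^sub>v g) \<bullet> (N *\<^sub>v g) - lam * (g \<bullet> g))"
  proof
    fix t
    have "lam * ((x + t \<cdot>\<^sub>v g) \<bullet> (x + t \<cdot>\<^sub>v g)) \<le> (N *\<^sub>v (x + t \<cdot>\<^sub>v g)) \<bullet> (N *\<^sub>v (x + t \<cdot>\<^sub>v g))"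
      by (rule psd) (use x g in simp)
    also have "N *\<^sub>v (x + t \<cdot>\<^sub>v g) = N *\<^sub>v x + t \<cdot>\<^sub>v (N *\<^sub>v g)"
      by (subst mult_add_distrib_mat_vec[OF N x], use g in simp, subst mult_mat_vec[OF N g], rule refl)
    finally have "lam * (x \<bullet> x + 2*t*(x \<bullet> g) + t^2 * (g \<bullet> g)) \<le>
        (N *\<^sub>v x) \<bullet> (N *\<^sub>v x) + 2*t*((N *\<^sub>v x) \<bullet> (N *\<^sub>v g)) + t^2 * ((N *\<^sub>v g) \<bullet> (N *\<^sub>v g))"
      by (simp only: quad[OF x g] quad[OF Nx Ng])
    thus "0 \<le> 2*t*(g \<bullet> g) + t^2*((N *\<^sub>v g) \<bullet> (N *\<^sub>v g) - lam * (g \<bullet> g))"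
      using eq key by (rule aux_ineq)
  qed
  from quad_neg_lemma[OF this self_sp_nonneg] have "g = 0\<^sub>v d" using self_sp_zero[OF g] by auto
  show ?thesis
  proof (rule eq_vecI)
    fix i assume i: "i < dim_vec (lam \<cdot>\<^sub>v x)"
    have "g $ i = 0" using \<open>g = 0\<^sub>v d\<close> i x by simp
    thus "((transpose_mat N * N) *\<^sub>v x) $ i = (lam \<cdot>\<^sub>v x) $ i" unfolding g_def using i x N by simp
  qed (use N x in simp)
qed

lemma rayleigh:
  fixes N :: "real mat"
  assumes N: "N \<in> carrier_mat d d"
    and mu_min: "\<And>lam. eigenvalue (transpose_mat N * N) lam \<Longrightarrow> mu \<le> lam"
    and x: "x \<in> carrier_vec d"
  shows "mu * (x \<bullet> x) \<le> (N *\<^sub>v x) \<bullet> (N *\<^sub>v x)"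
proof (cases "d = 0")
  case True
  then show ?thesis using x N by (simp add: scalar_prod_def)
next
  case False
  hence d: "d > 0" by auto
  define Q where "Q = (\<lambda>f::nat\<Rightarrow>real. \<Sum>i<d. (\<Sum>j<d. N $$ (i,j) * f j)^2)"
  have Qeq: "Q f = (N *\<^sub>v vec d f) \<bullet> (N *\<^sub>v vec d f)" for f
    unfolding Q_def using N by (subst sp_sum[of _ d]) (auto simp: scalar_prod_def lessThan_atLeast0 power2_eq_square)
  have Qc: "continuous_on UNIV Q" unfolding Q_def
    by (intro continuous_on_sum continuous_on_power continuous_on_mult continuous_on_const
        continuous_on_product_coordinates)
  obtain x0 where x0: "\<forall>i\<ge>d. x0 i = 0" "(\<Sum>i<d. (x0 i)^2) = 1"
    "\<And>y. (\<forall>i\<ge>d. y i = 0) \<Longrightarrow> (\<Sum>i<d. (y i)^2) = 1 \<Longrightarrow> Q x0 \<le> Q y"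
    using exists_min_sphere[OF Qc d] by blast
  define lam where "lam = Q x0"
  have sq: "y \<bullet> y = (\<Sum>i<d. (y $ i)^2)" if "y \<in> carrier_vec d" for y :: "real vec"
    using that by (simp add: sp_sum[of _ d] power2_eq_square)
  have psd: "lam * (y \<bullet> y) \<le> (N *\<^sub>v y) \<bullet> (N *\<^sub>v y)" if y: "y \<in> carrier_vec d" for y
  proof (cases "y \<bullet> y = 0")
    case True
    then show ?thesis using self_sp_nonneg by simp
  next
    case False
    hence pos: "y \<bullet> y > 0" using self_sp_nonneg[of y] by auto
    define s where "s = sqrt (y \<bullet> y)"
    have s: "s > 0" "s^2 = y \<bullet> y" unfolding s_def using pos by auto
    define f where "f = (\<lambda>i. if i < d then y $ i / s else 0)"
    have vf: "vec d f = (1/s) \<cdot>\<^sub>v y" unfolding f_def using y by (intro eq_vecI) auto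
    have "(\<Sum>i<d. (f i)^2) = (\<Sum>i<d. (y$i)^2) / s^2"
      unfolding f_def by (simp add: sum_divide_distrib power_divide)
    also have "\<dots> = 1" using s sq[OF y] pos by simp
    finally have fs: "(\<Sum>i<d. (f i)^2) = 1" .
    have f0: "\<forall>i\<ge>d. f i = 0" unfolding f_def by simp
    have "Q x0 \<le> Q f" by (rule x0(3)[OF f0 fs])
    also have "Q f = (1/s)^2 * ((N *\<^sub>v y) \<bullet> (N *\<^sub>v y))"
      unfolding Qeq vf using N y by (simp add: mult_mat_vec[of _ d d] power2_eq_square)
    finally have "lam \<le> ((N *\<^sub>v y) \<bullet> (N *\<^sub>v y)) / (y \<bullet> y)" unfolding lam_def using s
      by (simp add: power_divide)
    thus ?thesis using pos by (simp add: field_simps)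
  qed
  define v0 where "v0 = vec d x0"
  have v0: "v0 \<in> carrier_vec d" unfolding v0_def by auto
  have v0n: "v0 \<bullet> v0 = 1" using sq[OF v0] x0(2) unfolding v0_def by simp
  have eqv0: "lam * (v0 \<bullet> v0) = (N *\<^sub>v v0) \<bullet> (N *\<^sub>v v0)" using v0n Qeq unfolding lam_def v0_def by simp
  have "eigenvector (transpose_mat N * N) v0 lam"
  proof -
    have z: "(0\<^sub>v d :: real vec) \<bullet> 0\<^sub>v d = 0" by (simp add: scalar_prod_def)
    have "v0 \<noteq> 0\<^sub>v d" using v0n z by auto
    thus ?thesis unfolding eigenvector_def using N v0 psd_eig[OF N psd v0 eqv0] by simp
  qed
  hence "mu \<le> lam" using mu_min unfolding eigenvalue_def by blast
  hence "mu * (x \<bullet> x) \<le> lam * (x \<bullet> x)" using self_sp_nonneg[of x] by (rule mult_right_mono)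
  thus ?thesis using psd[OF x] by linarith
qed

lemma real_eig_le_rho:
  fixes B :: "real mat"
  assumes B: "B \<in> carrier_mat d d" and ev: "eigenvalue B lam"
  shows "\<bar>lam\<bar> \<le> real_spectral_radius B"
proof -
  obtain v where v: "eigenvector B v lam" using ev unfolding eigenvalue_def by auto
  hence vc: "v \<in> carrier_vec d" "v \<noteq> 0\<^sub>v d" "B *\<^sub>v v = lam \<cdot>\<^sub>v v"
    unfolding eigenvector_def using B by auto
  let ?Bc = "map_mat complex_of_real B" and ?vc = "map_vec complex_of_real v"
  have "?Bc *\<^sub>v ?vc = map_vec complex_of_real (B *\<^sub>v v)"
    by (rule of_real_hom.mult_mat_vec_hom[OF B vc(1), symmetric])
  also have "\<dots> = complex_of_real lam \<cdot>\<^sub>v ?vc" unfolding vc(3) by (rule of_real_hom.vec_hom_smult)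
  finally have "eigenvector ?Bc ?vc (complex_of_real lam)"
    unfolding eigenvector_def using B vc by auto
  hence ev': "eigenvalue ?Bc (complex_of_real lam)" unfolding eigenvalue_def by auto
  have Bc: "?Bc \<in> carrier_mat d d" using B by auto
  have d: "d > 0" using eigenvalue_imp_nonzero_dim[OF Bc ev'] by auto
  have "norm (complex_of_real lam) \<in> norm ` spectrum ?Bc" using ev' unfolding spectrum_def by blast
  from spectral_radius_mem_max(2)[OF Bc d this]
  show ?thesis unfolding real_spectral_radius_def by simp
qed

lemma nonneg_pow:
  fixes P :: "real mat"
  assumes P: "P \<in> carrier_mat d d" and nn: "\<forall>i<d. \<forall>j<d. P $$ (i,j) \<ge> 0"
  shows "\<forall>i<d. \<forall>j<d. (P ^\<^sub>m k) $$ (i,j) \<ge> 0"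
proof (induction k)
  case 0
  then show ?case using P by auto
next
  case (Suc k)
  have Pk: "P ^\<^sub>m k \<in> carrier_mat d d" using P by simp
  show ?case
  proof (intro allI impI)
    fix i j assume i: "i < d" and j: "j < d"
    have "(P ^\<^sub>m Suc k) $$ (i,j) = (\<Sum>l<d. (P ^\<^sub>m k) $$ (i,l) * P $$ (l,j))"
      using Pk P i j by (simp add: scalar_prod_def lessThan_atLeast0)
    also have "\<dots> \<ge> 0" using Suc nn i j by (intro sum_nonneg mult_nonneg_nonneg) auto
    finally show "(P ^\<^sub>m Suc k) $$ (i,j) \<ge> 0" .
  qed
qed

lemma nonneg_mono:
  fixes P :: "real mat"
  assumes P: "P \<in> carrier_mat d d" and nn: "\<forall>i<d. \<forall>j<d. P $$ (i,j) \<ge> 0"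
    and x: "x \<in> carrier_vec d" and y: "y \<in> carrier_vec d" and le: "\<forall>i<d. x $ i \<le> y $ i"
    and i: "i < d"
  shows "(P *\<^sub>v x) $ i \<le> (P *\<^sub>v y) $ i"
  unfolding mv_index[OF P x i] mv_index[OF P y i]
  using nn le i by (intro sum_mono mult_left_mono) auto

lemma collatz:
  fixes A :: "real mat"
  assumes A: "A \<in> carrier_mat d d" and nonneg: "nonneg_mat A"
    and rho: "real_spectral_radius A < 1"
    and m: "m \<in> carrier_vec d" and m0: "\<forall>i<d. m $ i \<ge> 0"
    and mA: "\<forall>i<d. m $ i \<le> (A *\<^sub>v m) $ i"
  shows "m = 0\<^sub>v d"
proof (rule ccontr)
  assume "m \<noteq> 0\<^sub>v d"
  then obtain i0 where i0: "i0 < d" "m $ i0 \<noteq> 0" using m by (metis eq_vecI carrier_vecD index_zero_vec)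
  hence mi0: "m $ i0 > 0" using m0 by force
  have d: "d > 0" using i0 by auto
  have nnA: "\<forall>i<d. \<forall>j<d. A $$ (i,j) \<ge> 0" using nonneg A unfolding nonneg_mat_def by auto
  define \<rho> where "\<rho> = max (real_spectral_radius A) 0"
  have \<rho>: "\<rho> \<ge> 0" "\<rho> < 1" using rho unfolding \<rho>_def by auto
  define c where "c = 2 / (1 + \<rho>)"
  have c1: "c > 1" unfolding c_def using \<rho> by (simp add: field_simps)
  have crho: "c * \<rho> < 1" unfolding c_def using \<rho> by (simp add: field_simps)
  define Ac where "Ac = map_mat complex_of_real A"
  have Ac: "Ac \<in> carrier_mat d d" unfolding Ac_def using A by auto
  define Br where "Br = c \<cdot>\<^sub>m A"
  have Br: "Br \<in> carrier_mat d d" unfolding Br_def using A by auto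
  define Bc where "Bc = map_mat complex_of_real Br"
  have Bc: "Bc \<in> carrier_mat d d" unfolding Bc_def using Br by auto
  have BcAc: "Bc = complex_of_real c \<cdot>\<^sub>m Ac"
    unfolding Bc_def Ac_def Br_def using A by (intro eq_matI) auto
  have srB: "spectral_radius Bc < 1"
  proof -
    from spectral_radius_mem_max(1)[OF Bc d]
    obtain \<kappa> where \<kappa>: "eigenvalue Bc \<kappa>" "spectral_radius Bc = norm \<kappa>"
      unfolding spectrum_def by auto
    obtain w where w: "eigenvector Bc w \<kappa>" using \<kappa>(1) unfolding eigenvalue_def by auto
    hence wc: "w \<in> carrier_vec d" "w \<noteq> 0\<^sub>v d" "Bc *\<^sub>v w = \<kappa> \<cdot>\<^sub>v w"
      unfolding eigenvector_def using Bc by auto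
    have "Ac *\<^sub>v w = (\<kappa> / complex_of_real c) \<cdot>\<^sub>v w"
    proof (rule eq_vecI)
      fix i assume "i < dim_vec ((\<kappa> / complex_of_real c) \<cdot>\<^sub>v w)"
      hence i: "i < d" using wc by auto
      have "(Bc *\<^sub>v w) $ i = complex_of_real c * (Ac *\<^sub>v w) $ i"
        unfolding BcAc mv_index[OF _ wc(1) i, of "_ \<cdot>\<^sub>m Ac"] using Ac i wc(1)
        by (simp add: scalar_prod_def lessThan_atLeast0 sum_distrib_left mult.assoc)
      hence "complex_of_real c * (Ac *\<^sub>v w) $ i = \<kappa> * w $ i" using wc i by simp
      thus "(Ac *\<^sub>v w) $ i = ((\<kappa> / complex_of_real c) \<cdot>\<^sub>v w) $ i"
        using i wc c1 by (simp add: field_simps)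
    qed (use Ac wc in auto)
    hence "eigenvalue Ac (\<kappa> / complex_of_real c)"
      unfolding eigenvalue_def eigenvector_def using wc Ac by auto
    hence "norm (\<kappa> / complex_of_real c) \<in> norm ` spectrum Ac" unfolding spectrum_def by auto
    from spectral_radius_mem_max(2)[OF Ac d this]
    have "norm \<kappa> / c \<le> real_spectral_radius A" using c1
      unfolding real_spectral_radius_def Ac_def by (simp add: norm_divide)
    hence "norm \<kappa> \<le> c * real_spectral_radius A" using c1 by (simp add: field_simps)
    also have "\<dots> \<le> c * \<rho>" unfolding \<rho>_def using c1 by (intro mult_left_mono) auto
    finally have "norm \<kappa> \<le> c * \<rho>" .
    thus ?thesis using \<kappa>(2) crho by simp
  qed
  from spectral_radius_jnf_norm_bound_less_1_upper_triangular[OF Bc srB]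
  obtain K where K: "\<And>k. norm_bound (Bc ^\<^sub>m k) K" by auto
  have Kr: "\<bar>(Br ^\<^sub>m k) $$ (i,j)\<bar> \<le> K" if "i < d" "j < d" for i j k
  proof -
    have "Bc ^\<^sub>m k = map_mat complex_of_real (Br ^\<^sub>m k)"
      unfolding Bc_def by (rule of_real_hom.mat_hom_pow[OF Br, symmetric])
    with K[of k] that Br show ?thesis unfolding norm_bound_def by force
  qed
  have nnB: "\<forall>i<d. \<forall>j<d. Br $$ (i,j) \<ge> 0" unfolding Br_def using nnA c1 A by auto
  have grow: "\<forall>i<d. c^k * m $ i \<le> (Br ^\<^sub>m k *\<^sub>v m) $ i" for k
  proof (induction k)
    case 0
    then show ?case using Br m by simp
  next
    case (Suc k)
    have Bk: "Br ^\<^sub>m k \<in> carrier_mat d d" using Br by simp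
    have Bm: "\<forall>i<d. (c \<cdot>\<^sub>v m) $ i \<le> (Br *\<^sub>v m) $ i"
    proof (intro allI impI)
      fix i assume i: "i < d"
      have "(Br *\<^sub>v m) $ i = c * (A *\<^sub>v m) $ i"
        unfolding Br_def mv_index[OF A m i] using A m i
        by (simp add: scalar_prod_def lessThan_atLeast0 sum_distrib_left mult.assoc)
      thus "(c \<cdot>\<^sub>v m) $ i \<le> (Br *\<^sub>v m) $ i" using mA i m c1 by simp
    qed
    show ?case
    proof (intro allI impI)
      fix i assume i: "i < d"
      have "c^(Suc k) * m $ i = c * (c^k * m $ i)" by simp
      also have "\<dots> \<le> c * (Br ^\<^sub>m k *\<^sub>v m) $ i" using Suc i c1 by simp
      also have "\<dots> = (Br ^\<^sub>m k *\<^sub>v (c \<cdot>\<^sub>v m)) $ i"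
        using mult_mat_vec[OF Bk m, of c] i carrier_matD[OF Bk] m by simp
      also have "\<dots> \<le> (Br ^\<^sub>m k *\<^sub>v (Br *\<^sub>v m)) $ i"
        by (rule nonneg_mono[OF Bk nonneg_pow[OF Br nnB] _ _ Bm i]) (use m Br in auto)
      also have "\<dots> = (Br ^\<^sub>m Suc k *\<^sub>v m) $ i" using assoc_mult_mat_vec[OF Bk Br m] by simp
      finally show "c^(Suc k) * m $ i \<le> (Br ^\<^sub>m Suc k *\<^sub>v m) $ i" .
    qed
  qed
  define S where "S = (\<Sum>j<d. m $ j)"
  have bound: "c^k * m $ i0 \<le> K * S" for k
  proof -
    have "c^k * m $ i0 \<le> (Br ^\<^sub>m k *\<^sub>v m) $ i0" using grow i0 by auto
    also have "\<dots> = (\<Sum>j<d. (Br ^\<^sub>m k) $$ (i0,j) * m $ j)"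
      by (rule mv_index[OF _ m i0(1)]) (use Br in simp)
    also have "\<dots> \<le> (\<Sum>j<d. K * m $ j)"
      using Kr[OF i0(1)] m0 by (intro sum_mono mult_right_mono) (auto intro: abs_le_D1)
    finally show ?thesis unfolding S_def by (simp add: sum_distrib_left)
  qed
  obtain k where "K * S / m $ i0 < c^k" using real_arch_pow[OF c1] by blast
  hence "K * S < c^k * m $ i0" using mi0 by (simp add: field_simps)
  thus False using bound[of k] by simp
qed

lemma N_index:
  fixes A :: "real mat"
  assumes A: "A \<in> carrier_mat d d" and p: "p \<in> carrier_vec d" and i: "i < d"
  shows "((1\<^sub>m d - A) *\<^sub>v p) $ i = p $ i - (A *\<^sub>v p) $ i"
proof -
  have "((1\<^sub>m d - A) *\<^sub>v p) $ i = (\<Sum>j<d. (1\<^sub>m d - A) $$ (i,j) * p $ j)"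
    by (rule mv_index[OF _ p i]) (use A in auto)
  also have "\<dots> = (\<Sum>j<d. (if i = j then p $ j else 0) - A $$ (i,j) * p $ j)"
    by (rule sum.cong) (use A i in \<open>auto simp: algebra_simps\<close>)
  also have "\<dots> = p $ i - (A *\<^sub>v p) $ i"
    using i by (simp add: sum_subtractf mv_index[OF A p i])
  finally show ?thesis .
qed

lemma mono_inv:
  fixes A :: "real mat"
  assumes A: "A \<in> carrier_mat d d" and nonneg: "nonneg_mat A"
    and rho: "real_spectral_radius A < 1"
    and p: "p \<in> carrier_vec d" and Np: "\<forall>i<d. ((1\<^sub>m d - A) *\<^sub>v p) $ i \<ge> 0"
  shows "\<forall>i<d. p $ i \<ge> 0"
proof -
  have nnA: "\<forall>i<d. \<forall>j<d. A $$ (i,j) \<ge> 0" using nonneg A unfolding nonneg_mat_def by auto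
  define m where "m = vec d (\<lambda>i. max 0 (- (p $ i)))"
  have m: "m \<in> carrier_vec d" unfolding m_def by simp
  define q where "q = vec d (\<lambda>i. - (p $ i))"
  have q: "q \<in> carrier_vec d" unfolding q_def by simp
  have m0: "\<forall>i<d. m $ i \<ge> 0" unfolding m_def by simp
  have mA: "\<forall>i<d. m $ i \<le> (A *\<^sub>v m) $ i"
  proof (intro allI impI)
    fix i assume i: "i < d"
    have Am0: "(A *\<^sub>v m) $ i \<ge> 0"
      unfolding mv_index[OF A m i] using nnA m0 i by (intro sum_nonneg mult_nonneg_nonneg) auto
    have "(A *\<^sub>v q) $ i \<le> (A *\<^sub>v m) $ i"
      by (rule nonneg_mono[OF A nnA q m _ i]) (auto simp: q_def m_def)
    moreover have "(A *\<^sub>v q) $ i = - (A *\<^sub>v p) $ i"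
    proof -
      have "(A *\<^sub>v q) $ i = (\<Sum>j<d. A $$ (i,j) * q $ j)" by (rule mv_index[OF A q i])
      also have "\<dots> = (\<Sum>j<d. - (A $$ (i,j) * p $ j))" by (rule sum.cong) (auto simp: q_def)
      also have "\<dots> = - (A *\<^sub>v p) $ i" by (simp add: sum_negf mv_index[OF A p i])
      finally show ?thesis .
    qed
    moreover have "p $ i - (A *\<^sub>v p) $ i \<ge> 0"
    proof -
      have "((1\<^sub>m d - A) *\<^sub>v p) $ i \<ge> 0" using Np i by blast
      thus ?thesis using N_index[OF A p i] by linarith
    qed
    moreover have "m $ i = max 0 (- (p $ i))" using i by (simp add: m_def)
    ultimately show "m $ i \<le> (A *\<^sub>v m) $ i" using Am0 by (simp add: max_def)
  qed
  have "m = 0\<^sub>v d" by (rule collatz[OF A nonneg rho m m0 mA])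
  hence "\<forall>i<d. m $ i = 0" by simp
  thus ?thesis unfolding m_def by (auto simp: max_def split: if_splits)
qed

lemma mono_inv2:
  fixes A :: "real mat"
  assumes A: "A \<in> carrier_mat d d" and nonneg: "nonneg_mat A"
    and rho: "real_spectral_radius A < 1"
    and p: "p \<in> carrier_vec d" and q: "q \<in> carrier_vec d"
    and le: "\<forall>i<d. ((1\<^sub>m d - A) *\<^sub>v p) $ i \<le> ((1\<^sub>m d - A) *\<^sub>v q) $ i"
  shows "\<forall>i<d. p $ i \<le> q $ i"
proof -
  have "\<forall>i<d. ((1\<^sub>m d - A) *\<^sub>v (q - p)) $ i \<ge> 0"
  proof (intro allI impI)
    fix i assume i: "i < d"
    have "((1\<^sub>m d - A) *\<^sub>v (q - p)) $ i = (q - p) $ i - (A *\<^sub>v (q - p)) $ i"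
      by (rule N_index[OF A _ i]) (use p q in auto)
    also have "\<dots> = (q $ i - (A *\<^sub>v q) $ i) - (p $ i - (A *\<^sub>v p) $ i)"
      using p q i A by (simp add: mult_minus_distrib_mat_vec[OF A q p])
    also have "\<dots> = ((1\<^sub>m d - A) *\<^sub>v q) $ i - ((1\<^sub>m d - A) *\<^sub>v p) $ i"
      using N_index[OF A p i] N_index[OF A q i] by simp
    finally show "((1\<^sub>m d - A) *\<^sub>v (q - p)) $ i \<ge> 0" using le i by simp
  qed
  from mono_inv[OF A nonneg rho _ this] p q show ?thesis by auto
qed

lemma N_surj:
  fixes A :: "real mat"
  assumes A: "A \<in> carrier_mat d d" and nonneg: "nonneg_mat A"
    and rho: "real_spectral_radius A < 1"
    and b: "b \<in> carrier_vec d"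
  shows "\<exists>q \<in> carrier_vec d. (1\<^sub>m d - A) *\<^sub>v q = b"
proof -
  have N: "1\<^sub>m d - A \<in> carrier_mat d d" using A by auto
  have "det (1\<^sub>m d - A) \<noteq> 0"
  proof
    assume "det (1\<^sub>m d - A) = 0"
    then obtain v where v: "v \<in> carrier_vec d" "v \<noteq> 0\<^sub>v d" "(1\<^sub>m d - A) *\<^sub>v v = 0\<^sub>v d"
      using det_0_iff_vec_prod_zero[OF N] by auto
    have z: "(1\<^sub>m d - A) *\<^sub>v 0\<^sub>v d = 0\<^sub>v d" by (rule eq_vecI) (use A in \<open>auto simp: scalar_prod_def\<close>)
    have "\<forall>i<d. v $ i \<le> (0\<^sub>v d) $ i"
    proof (rule mono_inv2[OF A nonneg rho v(1)])
      show "\<forall>i<d. ((1\<^sub>m d - A) *\<^sub>v v) $ i \<le> ((1\<^sub>m d - A) *\<^sub>v 0\<^sub>v d) $ i" using v z by simp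
    qed simp
    moreover have "\<forall>i<d. (0\<^sub>v d) $ i \<le> v $ i"
    proof (rule mono_inv2[OF A nonneg rho _ v(1)])
      show "\<forall>i<d. ((1\<^sub>m d - A) *\<^sub>v 0\<^sub>v d) $ i \<le> ((1\<^sub>m d - A) *\<^sub>v v) $ i" using v z by simp
    qed simp
    ultimately have "v = 0\<^sub>v d" using v(1) by (intro eq_vecI) (auto intro: antisym)
    thus False using v(2) by simp
  qed
  from det_non_zero_imp_unit[OF N this, of undefined]
  obtain Ni where Ni: "Ni \<in> carrier_mat d d" "(1\<^sub>m d - A) * Ni = 1\<^sub>m d"
    unfolding Units_def ring_mat_def by auto
  show ?thesis
  proof (intro bexI)
    show "(1\<^sub>m d - A) *\<^sub>v (Ni *\<^sub>v b) = b" using assoc_mult_mat_vec[OF N Ni(1) b, symmetric] Ni(2) b by simp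
  qed (use Ni b in auto)
qed

lemma sq_sum_vec: "(x::real vec) \<in> carrier_vec d \<Longrightarrow> x \<bullet> x = (\<Sum>i<d. (x $ i)^2)"
  by (simp add: sp_sum[of _ d] power2_eq_square)

lemma lower_bound:
  fixes A Y :: "real mat"
  assumes A: "A \<in> carrier_mat d d" and nonneg: "nonneg_mat A"
    and rho: "real_spectral_radius A < 1"
    and mu_min: "\<And>lam. eigenvalue (transpose_mat (1\<^sub>m d - A) * (1\<^sub>m d - A)) lam \<Longrightarrow> mu \<le> lam"
    and mu0: "mu \<ge> 0" and d: "d > 0"
    and Y: "Y \<in> carrier_mat d d" and rY: "real_spectral_radius Y \<ge> 1"
  shows "sqrt mu \<le> frob_norm (Y - A)"
proof -
  define N where "N = 1\<^sub>m d - A"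
  have N: "N \<in> carrier_mat d d" unfolding N_def using A by auto
  have nnA: "\<forall>i<d. \<forall>j<d. A $$ (i,j) \<ge> 0" using nonneg A unfolding nonneg_mat_def by auto
  define Yc where "Yc = map_mat complex_of_real Y"
  have Yc: "Yc \<in> carrier_mat d d" unfolding Yc_def using Y by auto
  from spectral_radius_mem_max(1)[OF Yc d]
  obtain ev where ev: "eigenvalue Yc ev" "spectral_radius Yc = norm ev"
    unfolding spectrum_def by auto
  have l1: "norm ev \<ge> 1" using rY ev(2) unfolding real_spectral_radius_def Yc_def by simp
  obtain z where "eigenvector Yc z ev" using ev(1) unfolding eigenvalue_def by auto
  hence z: "z \<in> carrier_vec d" "z \<noteq> 0\<^sub>v d" "Yc *\<^sub>v z = ev \<cdot>\<^sub>v z"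
    unfolding eigenvector_def using Yc by auto
  define D where "D = Y - A"
  have D: "D \<in> carrier_mat d d" unfolding D_def using Y A by auto
  define w where "w = (\<lambda>i. \<Sum>j<d. complex_of_real (D $$ (i,j)) * z $ j)"
  define a where "a = vec d (\<lambda>i. norm (z $ i))"
  define b where "b = vec d (\<lambda>i. norm (w i))"
  have a: "a \<in> carrier_vec d" and b: "b \<in> carrier_vec d" unfolding a_def b_def by auto
  have a0: "\<forall>i<d. a $ i \<ge> 0" unfolding a_def by auto
  have claim1: "\<forall>i<d. ((1\<^sub>m d - A) *\<^sub>v a) $ i \<le> b $ i"
  proof (intro allI impI)
    fix i assume i: "i < d"
    have "ev * z $ i = (Yc *\<^sub>v z) $ i" using z i by simp
    also have "\<dots> = (\<Sum>j<d. complex_of_real (Y $$ (i,j)) * z $ j)"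
      unfolding mv_index[OF Yc z(1) i] using Y i by (intro sum.cong) (auto simp: Yc_def)
    also have "\<dots> = (\<Sum>j<d. complex_of_real (A $$ (i,j)) * z $ j) + w i"
      unfolding w_def sum.distrib[symmetric] using Y A i
      by (intro sum.cong) (auto simp: D_def algebra_simps)
    finally have eq: "ev * z $ i = (\<Sum>j<d. complex_of_real (A $$ (i,j)) * z $ j) + w i" .
    have "norm ev * a $ i = norm (ev * z $ i)" using i by (simp add: a_def norm_mult)
    also have "\<dots> \<le> norm (\<Sum>j<d. complex_of_real (A $$ (i,j)) * z $ j) + norm (w i)"
      unfolding eq by (rule norm_triangle_ineq)
    also have "norm (\<Sum>j<d. complex_of_real (A $$ (i,j)) * z $ j) \<le> (\<Sum>j<d. norm (complex_of_real (A $$ (i,j)) * z $ j))"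
      by (rule norm_sum)
    also have "\<dots> = (\<Sum>j<d. A $$ (i,j) * a $ j)"
      using nnA i by (intro sum.cong) (auto simp: a_def norm_mult)
    also have "\<dots> = (A *\<^sub>v a) $ i" by (rule mv_index[OF A a i, symmetric])
    finally have "norm ev * a $ i \<le> (A *\<^sub>v a) $ i + b $ i" using i by (simp add: b_def)
    moreover have "a $ i \<le> norm ev * a $ i"
      using mult_right_mono[OF l1, of "a $ i"] a0 i by simp
    ultimately show "((1\<^sub>m d - A) *\<^sub>v a) $ i \<le> b $ i" using N_index[OF A a i] by simp
  qed
  obtain q where q: "q \<in> carrier_vec d" "(1\<^sub>m d - A) *\<^sub>v q = b" using N_surj[OF A nonneg rho b] by auto
  have aq: "\<forall>i<d. a $ i \<le> q $ i"
    by (rule mono_inv2[OF A nonneg rho a q(1)]) (use claim1 q in simp)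
  have "a \<bullet> a \<le> q \<bullet> q"
    unfolding sq_sum_vec[OF a] sq_sum_vec[OF q(1)]
    using aq a0 by (intro sum_mono power_mono) auto
  hence "mu * (a \<bullet> a) \<le> mu * (q \<bullet> q)" using mu0 by (rule mult_left_mono)
  also have "\<dots> \<le> b \<bullet> b" using rayleigh[OF N mu_min[unfolded N_def[symmetric]] q(1)] q(2) unfolding N_def by simp
  also have "b \<bullet> b \<le> (\<Sum>i<d. \<Sum>j<d. (D $$ (i,j))^2) * (a \<bullet> a)"
  proof -
    have "(b $ i)^2 \<le> (\<Sum>j<d. (D $$ (i,j))^2) * (a \<bullet> a)" if i: "i < d" for i
    proof -
      have "b $ i = norm (\<Sum>j<d. complex_of_real (D $$ (i, j)) * z $ j)"
        unfolding b_def w_def using i by simp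
      also have "\<dots> \<le> (\<Sum>j<d. norm (complex_of_real (D $$ (i, j)) * z $ j))" by (rule norm_sum)
      also have "\<dots> = (\<Sum>j<d. \<bar>D $$ (i,j)\<bar> * a $ j)"
        by (rule sum.cong) (auto simp: a_def norm_mult)
      finally have "b $ i \<le> (\<Sum>j<d. \<bar>D $$ (i,j)\<bar> * a $ j)" .
      moreover have "b $ i \<ge> 0" unfolding b_def using i by simp
      ultimately have "(b $ i)^2 \<le> (\<Sum>j<d. \<bar>D $$ (i,j)\<bar> * a $ j)^2" by (rule power_mono)
      also have "\<dots> \<le> (\<Sum>j<d. (\<bar>D $$ (i,j)\<bar>)^2) * (\<Sum>j<d. (a $ j)^2)"
        by (rule Cauchy_Schwarz_ineq_sum)
      finally show ?thesis unfolding sq_sum_vec[OF a] by simp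
    qed
    hence "(\<Sum>i<d. (b $ i)^2) \<le> (\<Sum>i<d. (\<Sum>j<d. (D $$ (i,j))^2) * (a \<bullet> a))"
      by (intro sum_mono) auto
    thus ?thesis unfolding sq_sum_vec[OF b] by (simp add: sum_distrib_right)
  qed
  finally have ineq: "mu * (a \<bullet> a) \<le> (\<Sum>i<d. \<Sum>j<d. (D $$ (i,j))^2) * (a \<bullet> a)" .
  have apos: "a \<bullet> a > 0"
  proof -
    obtain i where i: "i < d" "z $ i \<noteq> 0" using z by (metis eq_vecI carrier_vecD index_zero_vec)
    have "(a $ i)^2 > 0" using i by (simp add: a_def)
    also have "(a $ i)^2 \<le> (\<Sum>i<d. (a $ i)^2)" by (rule member_le_sum) (use i in auto)
    finally show ?thesis unfolding sq_sum_vec[OF a] .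
  qed
  have "mu \<le> (\<Sum>i<d. \<Sum>j<d. (D $$ (i,j))^2)" using ineq apos by simp
  hence "sqrt mu \<le> sqrt (\<Sum>i<d. \<Sum>j<d. (D $$ (i,j))^2)" by (rule real_sqrt_le_mono)
  also have "\<dots> = frob_norm (Y - A)" unfolding frob_norm_def D_def using Y A by simp
  finally show ?thesis .
qed

theorem theorem1:
  fixes A :: "real mat" and d :: nat and mu :: real
  assumes A: "A \<in> carrier_mat d d"
    and nonneg: "nonneg_mat A"
    and rho: "real_spectral_radius A < 1"
    and mu_eig: "eigenvalue ((1\<^sub>m d - A\<^sup>T) * (1\<^sub>m d - A)) mu"
    and mu_min: "\<And>lam. eigenvalue ((1\<^sub>m d - A\<^sup>T) * (1\<^sub>m d - A)) lam \<Longrightarrow> mu \<le> lam"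
  shows "mu > 0 \<and>
    (\<exists>v. eigenvector ((1\<^sub>m d - A\<^sup>T) * (1\<^sub>m d - A)) v mu \<and> nonneg_vec v \<and> vec_norm v = 1 \<and>
      (let r = sqrt mu;
           u = (1 / r) \<cdot>\<^sub>v ((1\<^sub>m d - A) *\<^sub>v v);
           X = A + r \<cdot>\<^sub>m outer_prod u v
       in nonneg_vec u \<and> nonneg_mat X \<and> real_spectral_radius X \<ge> 1 \<and>
          frob_norm (X - A) = r \<and>
          (\<forall>Y \<in> carrier_mat d d. real_spectral_radius Y \<ge> 1 \<longrightarrow> frob_norm (Y - A) \<ge> r)))"
proof -
  define N where "N = 1\<^sub>m d - A"
  have N: "N \<in> carrier_mat d d" unfolding N_def using A by auto
  have NT: "1\<^sub>m d - A\<^sup>T = transpose_mat N" unfolding N_def by (rule eq_matI) (use A in auto)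
  define M where "M = transpose_mat N * N"
  have MM: "(1\<^sub>m d - A\<^sup>T) * (1\<^sub>m d - A) = M" unfolding M_def NT N_def ..
  have M: "M \<in> carrier_mat d d" unfolding M_def using N by auto
  have mu_min': "\<And>lam. eigenvalue (transpose_mat (1\<^sub>m d - A) * (1\<^sub>m d - A)) lam \<Longrightarrow> mu \<le> lam"
    using mu_min MM unfolding M_def N_def by simp
  have mu_minN: "\<And>lam. eigenvalue (transpose_mat N * N) lam \<Longrightarrow> mu \<le> lam"
    using mu_min' unfolding N_def by simp
  obtain v0 where "eigenvector M v0 mu" using mu_eig MM unfolding eigenvalue_def by auto
  hence v0: "v0 \<in> carrier_vec d" "v0 \<noteq> 0\<^sub>v d" "M *\<^sub>v v0 = mu \<cdot>\<^sub>v v0"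
    unfolding eigenvector_def using M by auto
  have d: "d > 0"
  proof (rule ccontr)
    assume "\<not> d > 0" hence "d = 0" by simp
    hence "v0 = 0\<^sub>v d" using v0(1) by (intro eq_vecI) auto
    thus False using v0(2) by simp
  qed
  have Nv0: "N *\<^sub>v v0 \<in> carrier_vec d" using N v0 by auto
  have q0: "mu * (v0 \<bullet> v0) = (N *\<^sub>v v0) \<bullet> (N *\<^sub>v v0)"
  proof -
    have "(N *\<^sub>v v0) \<bullet> (N *\<^sub>v v0) = (transpose_mat N *\<^sub>v (N *\<^sub>v v0)) \<bullet> v0"
      by (rule transpose_vec_mult_scalar[symmetric, OF N v0(1) Nv0])
    also have "transpose_mat N *\<^sub>v (N *\<^sub>v v0) = M *\<^sub>v v0" unfolding M_def using N v0 by simp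
    also have "\<dots> \<bullet> v0 = mu * (v0 \<bullet> v0)" unfolding v0(3) using v0 by simp
    finally show ?thesis by simp
  qed
  have v0pos: "v0 \<bullet> v0 > 0"
    using self_sp_nonneg[of v0] self_sp_zero[OF v0(1)] v0(2) by force
  have Nv0nz: "N *\<^sub>v v0 \<noteq> 0\<^sub>v d"
  proof
    assume z: "N *\<^sub>v v0 = 0\<^sub>v d"
    have "A *\<^sub>v v0 = 1 \<cdot>\<^sub>v v0"
    proof (rule eq_vecI)
      fix i assume "i < dim_vec (1 \<cdot>\<^sub>v v0)" hence i: "i < d" using v0 by simp
      have "(N *\<^sub>v v0) $ i = 0" using z i by simp
      thus "(A *\<^sub>v v0) $ i = (1 \<cdot>\<^sub>v v0) $ i" using N_index[OF A v0(1) i] i v0(1) unfolding N_def by simp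
    qed (use A v0 in simp)
    hence "eigenvalue A 1" unfolding eigenvalue_def eigenvector_def using A v0 by auto
    from real_eig_le_rho[OF A this] rho show False by simp
  qed
  have Nv0pos: "(N *\<^sub>v v0) \<bullet> (N *\<^sub>v v0) > 0"
    using self_sp_nonneg[of "N *\<^sub>v v0"] self_sp_zero[OF Nv0] Nv0nz by force
  have "0 < mu * (v0 \<bullet> v0)" using q0 Nv0pos by simp
  hence mupos: "mu > 0" using v0pos by (metis zero_less_mult_pos2)
  define s0 where "s0 = sqrt (v0 \<bullet> v0)"
  have s0: "s0 > 0" "s0 * s0 = v0 \<bullet> v0" unfolding s0_def using v0pos by auto
  define v1 where "v1 = (1 / s0) \<cdot>\<^sub>v v0"
  have v1: "v1 \<in> carrier_vec d" unfolding v1_def using v0 by simp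
  have v1n: "v1 \<bullet> v1 = 1" unfolding v1_def using v0(1) s0 v0pos by simp
  have Nv1: "N *\<^sub>v v1 = (1 / s0) \<cdot>\<^sub>v (N *\<^sub>v v0)" unfolding v1_def by (rule mult_mat_vec[OF N v0(1)])
  define y where "y = N *\<^sub>v v1"
  have y: "y \<in> carrier_vec d" unfolding y_def using N v1 by simp
  have yy: "y \<bullet> y = mu" unfolding y_def Nv1 using Nv0 s0 q0[symmetric] v0pos by simp
  define ya where "ya = vec d (\<lambda>i. \<bar>y $ i\<bar>)"
  have ya: "ya \<in> carrier_vec d" unfolding ya_def by simp
  obtain v where v: "v \<in> carrier_vec d" "N *\<^sub>v v = ya"
    using N_surj[OF A nonneg rho ya] unfolding N_def by auto
  have le1: "\<forall>i<d. v1 $ i \<le> v $ i"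
    by (rule mono_inv2[OF A nonneg rho v1 v(1)])
      (use v(2) y in \<open>auto simp: N_def[symmetric] y_def[symmetric] ya_def\<close>)
  have le2: "\<forall>i<d. ((-1) \<cdot>\<^sub>v v1) $ i \<le> v $ i"
  proof (rule mono_inv2[OF A nonneg rho _ v(1)])
    have "N *\<^sub>v ((-1) \<cdot>\<^sub>v v1) = (-1) \<cdot>\<^sub>v y" unfolding y_def by (rule mult_mat_vec[OF N v1])
    thus "\<forall>i<d. ((1\<^sub>m d - A) *\<^sub>v ((-1) \<cdot>\<^sub>v v1)) $ i \<le> ((1\<^sub>m d - A) *\<^sub>v v) $ i"
      using v(2) y unfolding N_def[symmetric] by (auto simp: ya_def)
  qed (use v1 in simp)
  have absle: "\<bar>v1 $ i\<bar> \<le> v $ i" if "i < d" for i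
    using le1 le2 that v1 by (auto simp: abs_if)
  have vnn: "\<forall>i<d. v $ i \<ge> 0" using absle by (meson abs_ge_zero order_trans)
  have "1 \<le> v \<bullet> v"
  proof -
    have "v1 \<bullet> v1 \<le> v \<bullet> v"
      unfolding sq_sum_vec[OF v1] sq_sum_vec[OF v(1)]
    proof (rule sum_mono)
      fix i assume "i \<in> {..<d}" hence i: "i < d" by simp
      have "(v1 $ i)^2 = \<bar>v1 $ i\<bar>^2" by simp
      also have "\<dots> \<le> (v $ i)^2" by (rule power_mono[OF absle[OF i]]) simp
      finally show "(v1 $ i)^2 \<le> (v $ i)^2" .
    qed
    thus ?thesis using v1n by simp
  qed
  have Nvv: "(N *\<^sub>v v) \<bullet> (N *\<^sub>v v) = mu"
  proof -
    have "(N *\<^sub>v v) \<bullet> (N *\<^sub>v v) = ya \<bullet> ya" using v(2) by simp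
    also have "\<dots> = y \<bullet> y" unfolding sq_sum_vec[OF ya] sq_sum_vec[OF y]
      by (rule sum.cong) (auto simp: ya_def)
    finally show ?thesis using yy by simp
  qed
  have "mu * (v \<bullet> v) \<le> mu" using rayleigh[OF N mu_minN v(1)] Nvv by simp
  hence vn: "v \<bullet> v = 1" using \<open>1 \<le> v \<bullet> v\<close> mupos by (simp add: mult_le_cancel_left1)
  have Mv: "M *\<^sub>v v = mu \<cdot>\<^sub>v v" unfolding M_def
    by (rule psd_eig[OF N _ v(1)]) (use rayleigh[OF N mu_minN] vn Nvv in auto)
  have vnz: "v \<noteq> 0\<^sub>v d"
  proof
    assume "v = 0\<^sub>v d"
    hence "v \<bullet> v = 0" by (simp add: scalar_prod_def)
    thus False using vn by simp
  qed
  have eigv: "eigenvector ((1\<^sub>m d - A\<^sup>T) * (1\<^sub>m d - A)) v mu"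
    unfolding MM eigenvector_def using M v(1) vnz Mv by auto
  have nnv: "nonneg_vec v" unfolding nonneg_vec_def using v(1) vnn by auto
  have normv: "vec_norm v = 1" unfolding vec_norm_def using v(1) vn sq_sum_vec[OF v(1)] by simp
  define r where "r = sqrt mu"
  have r: "r > 0" "r * r = mu" unfolding r_def using mupos by auto
  define u where "u = (1 / r) \<cdot>\<^sub>v ((1\<^sub>m d - A) *\<^sub>v v)"
  have uya: "u = (1 / r) \<cdot>\<^sub>v ya" unfolding u_def using v(2) unfolding N_def by simp
  have u: "u \<in> carrier_vec d" unfolding uya using ya by simp
  have ui: "u $ i = \<bar>y $ i\<bar> / r" if "i < d" for i using that unfolding uya ya_def by simp
  have nnu: "nonneg_vec u" unfolding nonneg_vec_def using u ui r by auto
  define X where "X = A + r \<cdot>\<^sub>m outer_prod u v"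
  have op: "outer_prod u v \<in> carrier_mat d d" unfolding outer_prod_def using u v(1) by auto
  have X: "X \<in> carrier_mat d d" unfolding X_def using A op by auto
  have Xij: "X $$ (i,j) = A $$ (i,j) + r * (u $ i * v $ j)" if "i < d" "j < d" for i j
    unfolding X_def outer_prod_def using that A u v(1) by simp
  have nnX: "nonneg_mat X" unfolding nonneg_mat_def
  proof (intro allI impI)
    fix i j assume "i < dim_row X" "j < dim_col X"
    hence ij: "i < d" "j < d" using X by auto
    have "A $$ (i,j) \<ge> 0" using nonneg A ij unfolding nonneg_mat_def by auto
    moreover have "u $ i \<ge> 0" "v $ j \<ge> 0" using ui[OF ij(1)] r vnn ij by auto
    ultimately show "X $$ (i,j) \<ge> 0" unfolding Xij[OF ij] using r by simp
  qed
  have Xv: "X *\<^sub>v v = 1 \<cdot>\<^sub>v v"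
  proof (rule eq_vecI)
    fix i assume "i < dim_vec (1 \<cdot>\<^sub>v v)" hence i: "i < d" using v(1) by simp
    have "(X *\<^sub>v v) $ i = (\<Sum>j<d. X $$ (i,j) * v $ j)" by (rule mv_index[OF X v(1) i])
    also have "\<dots> = (\<Sum>j<d. A $$ (i,j) * v $ j) + r * u $ i * (\<Sum>j<d. v $ j * v $ j)"
      by (simp add: Xij i sum.distrib sum_distrib_left algebra_simps)
    also have "(\<Sum>j<d. v $ j * v $ j) = 1" using vn sp_sum[OF v(1) v(1)] by simp
    also have "r * u $ i = ya $ i" using ui[OF i] r i by (simp add: ya_def)
    also have "ya $ i = v $ i - (A *\<^sub>v v) $ i"
      using N_index[OF A v(1) i] v(2) unfolding N_def by simp
    finally show "(X *\<^sub>v v) $ i = (1 \<cdot>\<^sub>v v) $ i" using mv_index[OF A v(1) i] i v(1) by simp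
  qed (use X v(1) in simp)
  have "eigenvalue X 1" unfolding eigenvalue_def eigenvector_def using X v(1) vnz Xv by auto
  from real_eig_le_rho[OF X this] have rhoX: "real_spectral_radius X \<ge> 1" by simp
  have frob: "frob_norm (X - A) = r"
  proof -
    have XA: "X - A \<in> carrier_mat d d" using A by (rule minus_carrier_mat)
    have "(\<Sum>i<d. \<Sum>j<d. ((X - A) $$ (i,j))^2) = (\<Sum>i<d. \<Sum>j<d. r^2 * ((u $ i)^2 * (v $ j)^2))"
      using A X by (intro sum.cong refl) (simp add: Xij power_mult_distrib)
    also have "\<dots> = (\<Sum>i<d. r^2 * (u $ i)^2 * (\<Sum>j<d. (v $ j)^2))"
      by (intro sum.cong refl) (simp add: sum_distrib_left mult.assoc)
    also have "(\<Sum>j<d. (v $ j)^2) = 1" using vn sq_sum_vec[OF v(1)] by simp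
    also have "(\<Sum>i<d. r^2 * (u $ i)^2 * 1) = r^2 * (\<Sum>i<d. (u $ i)^2)"
      by (simp add: sum_distrib_left)
    also have "(\<Sum>i<d. (u $ i)^2) = (\<Sum>i<d. (y $ i)^2) / r^2"
      by (simp add: ui sum_divide_distrib power_divide)
    also have "(\<Sum>i<d. (y $ i)^2) = mu" using yy sq_sum_vec[OF y] by simp
    finally have S: "(\<Sum>i<d. \<Sum>j<d. ((X - A) $$ (i,j))^2) = r^2" using r by (simp add: power2_eq_square)
    have dims: "dim_row (X - A) = d" "dim_col (X - A) = d" using XA by auto
    show ?thesis unfolding frob_norm_def dims S using r by simp
  qed
  have low: "\<forall>Y \<in> carrier_mat d d. real_spectral_radius Y \<ge> 1 \<longrightarrow> frob_norm (Y - A) \<ge> r"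
    unfolding r_def using lower_bound[OF A nonneg rho mu_min' _ d] mupos by auto
  show ?thesis
    unfolding Let_def
    using mupos eigv nnv normv nnu nnX rhoX frob low
    unfolding r_def u_def X_def by blast
qed

end
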